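(* Let $\omega$ be a closed self-dual 2-form on a neighborhood $N(C)\cong C\times D^3$ of a circle $C$ in an oriented Riemannian 4-manifold, with coordinates $(\theta,x_1,x_2,x_3)$ ($\theta\in C=\mathbb{R}/2\pi\mathbb{Z}$, $x\in D^3$) such that $d\theta,dx_1,dx_2,dx_3$ are orthonormal at each point $(\theta,0)$, and suppose $\omega$ vanishes on $C=C\times\{0\}$ and has the form $$\omega=L_1(\theta,x)(d\theta\, dx_1+dx_2\, dx_3)+L_2(\theta,x)(d\theta\, dx_2+dx_3\, dx_1)+L_3(\theta,x)(d\theta\, dx_3+dx_1\, dx_2)+Q,$$ where $L_i(\theta,x)=\sum_{j=1}^3L_{ij}(\theta)x_j$ and $Q$ is a 2-form whose coefficients are of order at least two in the $x_i$. Then for every $\theta$ the matrix $(L_{ij}(\theta))$ is symmetric and traceless. *)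

theory Defs
  imports "HOL-Analysis.Analysis"
begin

text \<open>Coordinates (theta, x1, x2, x3) on the chart C x D^3 of the tubular neighbourhood.
  Index 0 is theta, indices 1,2,3 are x1,x2,x3. A point is a quadruple of reals;
  theta ranges over all of R and every datum is required to be 2 pi periodic in theta.\<close>

type_synonym pt = "real \<times> real \<times> real \<times> real"

definition crd :: "nat \<Rightarrow> pt \<Rightarrow> real" where
  "crd a p = (if a = 0 then fst p else if a = 1 then fst (snd p)
              else if a = 2 then fst (snd (snd p)) else snd (snd (snd p)))"

definition ev :: "nat \<Rightarrow> pt" where
  "ev a = (if a = 0 then (1,0,0,0) else if a = 1 then (0,1,0,0)
           else if a = 2 then (0,0,1,0) else (0,0,0,1))"

definition rad2 :: "pt \<Rightarrow> real" where
  "rad2 p = (crd 1 p)^2 + (crd 2 p)^2 + (crd 3 p)^2"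

definition NC :: "pt set" where
  "NC = {p. rad2 p < 1}"

definition pd :: "nat \<Rightarrow> (pt \<Rightarrow> real) \<Rightarrow> pt \<Rightarrow> real" where
  "pd a f p = deriv (\<lambda>t. f (p + t *\<^sub>R ev a)) 0"

text \<open>A 2-form is given by antisymmetric coefficients w a b (a,b < 4), i.e.
  omega = sum over a<b of w a b dx^a dx^b. Closedness d omega = 0 in components.\<close>
definition closed_form2 :: "(nat \<Rightarrow> nat \<Rightarrow> pt \<Rightarrow> real) \<Rightarrow> pt set \<Rightarrow> bool" where
  "closed_form2 w U \<longleftrightarrow>
     (\<forall>a<4. \<forall>b<4. \<forall>p\<in>U. w a b differentiable (at p)) \<and>
     (\<forall>a<4. \<forall>b<4. \<forall>c<4. \<forall>p\<in>U.
        pd a (w b c) p + pd b (w c a) p + pd c (w a b) p = 0)"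

definition levi :: "nat \<Rightarrow> nat \<Rightarrow> nat \<Rightarrow> nat \<Rightarrow> real" where
  "levi a b c d = (let l = [a,b,c,d] in
     if distinct l \<and> set l = {0,1,2,3}
     then (-1) ^ card {(i,j). i < j \<and> j < 4 \<and> l!i > l!j} else 0)"

definition det4 :: "(nat \<Rightarrow> nat \<Rightarrow> real) \<Rightarrow> real" where
  "det4 M = (\<Sum>a<4. \<Sum>b<4. \<Sum>c<4. \<Sum>d<4. levi a b c d * M 0 a * M 1 b * M 2 c * M 3 d)"

definition minv :: "(nat \<Rightarrow> nat \<Rightarrow> real) \<Rightarrow> nat \<Rightarrow> nat \<Rightarrow> real" where
  "minv M = (SOME N. \<forall>i<4. \<forall>j<4. (\<Sum>k<4. M i k * N k j) = (if i = j then 1 else 0))"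

definition riem_metric :: "(pt \<Rightarrow> nat \<Rightarrow> nat \<Rightarrow> real) \<Rightarrow> pt set \<Rightarrow> bool" where
  "riem_metric g U \<longleftrightarrow>
     (\<forall>i<4. \<forall>j<4. \<forall>p\<in>U. (\<lambda>q. g q i j) differentiable (at p)) \<and>
     (\<forall>p\<in>U. \<forall>i<4. \<forall>j<4. g p i j = g p j i) \<and>
     (\<forall>p\<in>U. \<forall>v::nat \<Rightarrow> real. (\<exists>i<4. v i \<noteq> 0) \<longrightarrow>
         (\<Sum>i<4. \<Sum>j<4. v i * g p i j * v j) > 0)"

text \<open>Hodge star of a 2-form (components, at one point) for metric G, with the orientation
  given by d theta dx1 dx2 dx3:
  (*w)_cd = sqrt(det G)/2 * sum_{a,b} w^{ab} eps_{abcd}.\<close>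
definition hodge2 :: "(nat \<Rightarrow> nat \<Rightarrow> real) \<Rightarrow> (nat \<Rightarrow> nat \<Rightarrow> real) \<Rightarrow> nat \<Rightarrow> nat \<Rightarrow> real" where
  "hodge2 G w c d = sqrt (det4 G) / 2 *
     (\<Sum>a<4. \<Sum>b<4. levi a b c d *
        (\<Sum>e<4. \<Sum>f<4. minv G a e * minv G b f * w e f))"

definition self_dual :: "(pt \<Rightarrow> nat \<Rightarrow> nat \<Rightarrow> real) \<Rightarrow> (nat \<Rightarrow> nat \<Rightarrow> pt \<Rightarrow> real) \<Rightarrow> pt set \<Rightarrow> bool" where
  "self_dual g w U \<longleftrightarrow>
     (\<forall>p\<in>U. \<forall>c<4. \<forall>d<4. hodge2 (g p) (\<lambda>a b. w a b p) c d = w c d p)"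

end

theory Submission
  imports Defs
begin

lemma lin_deriv:
  fixes f :: "real \<Rightarrow> real"
  assumes "\<forall>t. \<bar>t\<bar> < 1 \<longrightarrow> \<bar>f t - c*t\<bar> \<le> K*t^2"
  shows "deriv f 0 = c"
proof -
  have f0: "f 0 = 0" using assms[rule_format, of 0] by simp
  have ev1: "\<forall>\<^sub>F t in at (0::real). \<bar>t\<bar> < 1 \<and> t \<noteq> 0"
    unfolding eventually_at by (rule exI[of _ 1]) (auto simp: dist_norm)
  have b: "norm ((f t - f 0)/t - c) \<le> \<bar>K\<bar> * \<bar>t\<bar>" if t: "\<bar>t\<bar> < 1 \<and> t \<noteq> 0" for t
  proof -
    have "(f t - f 0)/t - c = (f t - c*t)/t" using t f0 by (simp add: field_simps)
    also have "norm \<dots> = \<bar>f t - c*t\<bar> / \<bar>t\<bar>" by (simp add: abs_divide)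
    also have "\<dots> \<le> K*t^2 / \<bar>t\<bar>"
      by (rule divide_right_mono) (use assms t in auto)
    also have "K*t^2 / \<bar>t\<bar> = K * \<bar>t\<bar>"
    proof -
      have "t^2 = \<bar>t\<bar> * \<bar>t\<bar>" by (simp add: power2_eq_square)
      moreover have "\<bar>t\<bar> \<noteq> 0" using t by simp
      moreover have "\<And>a::real. a \<noteq> 0 \<Longrightarrow> K*(a*a)/a = K*a" by simp
      ultimately show ?thesis by metis
    qed
    also have "\<dots> \<le> \<bar>K\<bar> * \<bar>t\<bar>" by (simp add: mult_right_mono)
    finally show ?thesis .
  qed
  have "((\<lambda>t. (f t - f 0)/t - c) \<longlongrightarrow> 0) (at 0)"
  proof (rule Lim_null_comparison)
    show "\<forall>\<^sub>F t in at 0. norm ((f t - f 0)/t - c) \<le> \<bar>K\<bar> * \<bar>t\<bar>"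
      using ev1 by (rule eventually_mono) (rule b)
    show "((\<lambda>t. \<bar>K\<bar> * \<bar>t\<bar>) \<longlongrightarrow> 0) (at (0::real))"
      by (auto intro!: tendsto_eq_intros)
  qed
  then have "((\<lambda>t. (f t - f 0)/t) \<longlongrightarrow> c) (at 0)"
    by (simp add: Lim_null[symmetric])
  then have "(f has_field_derivative c) (at 0)"
    by (simp add: has_field_derivative_iff)
  then show ?thesis by (rule DERIV_imp_deriv)
qed

theorem mainTheorem3:
  fixes g :: "pt \<Rightarrow> nat \<Rightarrow> nat \<Rightarrow> real"
    and w Q :: "nat \<Rightarrow> nat \<Rightarrow> pt \<Rightarrow> real"
    and L :: "nat \<Rightarrow> nat \<Rightarrow> real \<Rightarrow> real"
  assumes metric: "riem_metric g NC"
    and g_periodic: "\<And>th x1 x2 x3 i j. g (th + 2 * pi, x1, x2, x3) i j = g (th, x1, x2, x3) i j"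
    and orthonormal_on_C: "\<And>th i j. i < 4 \<Longrightarrow> j < 4 \<Longrightarrow>
                             g (th, 0, 0, 0) i j = (if i = j then 1 else 0)"
    and w_antisym: "\<And>a b p. w a b p = - w b a p"
    and w_periodic: "\<And>th x1 x2 x3 a b. w a b (th + 2 * pi, x1, x2, x3) = w a b (th, x1, x2, x3)"
    and closed: "closed_form2 w NC"
    and selfdual: "self_dual g w NC"
    and vanishes_on_C: "\<And>th a b. w a b (th, 0, 0, 0) = 0"
    and Q_antisym: "\<And>a b p. Q a b p = - Q b a p"
    and Q_order2: "\<exists>K. \<forall>p\<in>NC. \<forall>a<4. \<forall>b<4. \<bar>Q a b p\<bar> \<le> K * rad2 p"
    and form:
      "\<And>p. p \<in> NC \<Longrightarrow>
         (let Li = (\<lambda>i. \<Sum>j\<in>{1,2,3}. L i j (crd 0 p) * crd j p) in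
           w 0 1 p = Li 1 + Q 0 1 p \<and> w 2 3 p = Li 1 + Q 2 3 p \<and>
           w 0 2 p = Li 2 + Q 0 2 p \<and> w 3 1 p = Li 2 + Q 3 1 p \<and>
           w 0 3 p = Li 3 + Q 0 3 p \<and> w 1 2 p = Li 3 + Q 1 2 p)"
  shows "\<forall>th. (\<forall>i\<in>{1,2,3}. \<forall>j\<in>{1,2,3}. L i j th = L j i th) \<and>
              L 1 1 th + L 2 2 th + L 3 3 th = 0"
proof
  fix th :: real
  obtain K where K: "\<forall>p\<in>NC. \<forall>a<4. \<forall>b<4. \<bar>Q a b p\<bar> \<le> K * rad2 p"
    using Q_order2 by blast
  define P where "P = (\<lambda>t::real. (th, t, 0::real, 0::real))"
  have [simp]: "(th,0,0,0) + t *\<^sub>R ev a =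
     (if a = 0 then (th + t,0,0,0) else if a = 1 then (th,t,0,0) else if a = 2 then (th,0,t,0) else (th,0,0,t))" for t a
    by (simp add: ev_def)
  have fm: "
           w 0 1 (th,x1,x2,x3) = L 1 1 th * x1 + L 1 2 th * x2 + L 1 3 th * x3 + Q 0 1 (th,x1,x2,x3) \<and>
           w 2 3 (th,x1,x2,x3) = L 1 1 th * x1 + L 1 2 th * x2 + L 1 3 th * x3 + Q 2 3 (th,x1,x2,x3) \<and>
           w 0 2 (th,x1,x2,x3) = L 2 1 th * x1 + L 2 2 th * x2 + L 2 3 th * x3 + Q 0 2 (th,x1,x2,x3) \<and>
           w 3 1 (th,x1,x2,x3) = L 2 1 th * x1 + L 2 2 th * x2 + L 2 3 th * x3 + Q 3 1 (th,x1,x2,x3) \<and>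
           w 0 3 (th,x1,x2,x3) = L 3 1 th * x1 + L 3 2 th * x2 + L 3 3 th * x3 + Q 0 3 (th,x1,x2,x3) \<and>
           w 1 2 (th,x1,x2,x3) = L 3 1 th * x1 + L 3 2 th * x2 + L 3 3 th * x3 + Q 1 2 (th,x1,x2,x3)"
    if "(th,x1,x2,x3) \<in> NC" for x1 x2 x3
    using form[OF that] by (simp add: Let_def crd_def)
  have inNC: "(th,t,0,0) \<in> NC" "(th,0,t,0) \<in> NC" "(th,0,0,t) \<in> NC" if "\<bar>t\<bar> < 1" for t
  proof -
    have "t^2 < 1" using that by (simp add: abs_square_less_1)
    then show "(th,t,0,0) \<in> NC" "(th,0,t,0) \<in> NC" "(th,0,0,t) \<in> NC"
      by (simp_all add: NC_def rad2_def crd_def)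
  qed
  have r2: "rad2 (th,t,0,0) = t^2" "rad2 (th,0,t,0) = t^2" "rad2 (th,0,0,t) = t^2" for t
    by (simp_all add: rad2_def crd_def)
  have Kb: "\<bar>Q a b p\<bar> \<le> K * rad2 p" if "p \<in> NC" "a < 4" "b < 4" for a b p
    using K that by blast
  have cl: "pd a (w b c) (th,0,0,0) + pd b (w c a) (th,0,0,0) + pd c (w a b) (th,0,0,0) = 0"
    if "a<4" "b<4" "c<4" for a b c
  proof -
    have "(th,0,0,0) \<in> NC" by (simp add: NC_def rad2_def crd_def)
    then show ?thesis using closed that unfolding closed_form2_def by blast
  qed
  have z: "pd 0 (w a b) (th,0,0,0) = 0" for a b
    unfolding pd_def using vanishes_on_C by simp
  have gen: "\<And>f c. (\<And>t. \<bar>t\<bar> < 1 \<Longrightarrow> \<bar>f t - c*t\<bar> \<le> K*t^2) \<Longrightarrow> deriv f 0 = c"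
    using lin_deriv by blast
  have d11: "pd 1 (w 2 3) (th,0,0,0) = L 1 1 th" unfolding pd_def
  proof (rule gen)
    fix t :: real assume "\<bar>t\<bar> < 1"
    then have p: "(th,t,0,0) \<in> NC" by (rule inNC(1))
    have e: "w 2 3 (th,t,0,0) = (L 1 1 th) * t + Q 2 3 (th,t,0,0)" using fm[OF p] by simp
    show "\<bar>w 2 3 ((th,0,0,0) + t *\<^sub>R ev 1) - (L 1 1 th) * t\<bar> \<le> K * t^2"
      using e Kb[OF p, of 2 3] r2 by simp
  qed
  have d22: "pd 2 (w 3 1) (th,0,0,0) = L 2 2 th" unfolding pd_def
  proof (rule gen)
    fix t :: real assume "\<bar>t\<bar> < 1"
    then have p: "(th,0,t,0) \<in> NC" by (rule inNC(2))
    have e: "w 3 1 (th,0,t,0) = (L 2 2 th) * t + Q 3 1 (th,0,t,0)" using fm[OF p] by simp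
    show "\<bar>w 3 1 ((th,0,0,0) + t *\<^sub>R ev 2) - (L 2 2 th) * t\<bar> \<le> K * t^2"
      using e Kb[OF p, of 3 1] r2 by simp
  qed
  have d33: "pd 3 (w 1 2) (th,0,0,0) = L 3 3 th" unfolding pd_def
  proof (rule gen)
    fix t :: real assume "\<bar>t\<bar> < 1"
    then have p: "(th,0,0,t) \<in> NC" by (rule inNC(3))
    have e: "w 1 2 (th,0,0,t) = (L 3 3 th) * t + Q 1 2 (th,0,0,t)" using fm[OF p] by simp
    show "\<bar>w 1 2 ((th,0,0,0) + t *\<^sub>R ev 3) - (L 3 3 th) * t\<bar> \<le> K * t^2"
      using e Kb[OF p, of 1 2] r2 by simp
  qed
  have d12: "pd 1 (w 2 0) (th,0,0,0) = - L 2 1 th" unfolding pd_def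
  proof (rule gen)
    fix t :: real assume "\<bar>t\<bar> < 1"
    then have p: "(th,t,0,0) \<in> NC" by (rule inNC(1))
    have e: "w 2 0 (th,t,0,0) = - ((L 2 1 th) * t + Q 0 2 (th,t,0,0))" using fm[OF p] w_antisym[of 2 0 "(th,t,0,0)"] by simp
    show "\<bar>w 2 0 ((th,0,0,0) + t *\<^sub>R ev 1) - (- L 2 1 th) * t\<bar> \<le> K * t^2"
      using e Kb[OF p, of 0 2] r2 by simp
  qed
  have d21: "pd 2 (w 0 1) (th,0,0,0) = L 1 2 th" unfolding pd_def
  proof (rule gen)
    fix t :: real assume "\<bar>t\<bar> < 1"
    then have p: "(th,0,t,0) \<in> NC" by (rule inNC(2))
    have e: "w 0 1 (th,0,t,0) = (L 1 2 th) * t + Q 0 1 (th,0,t,0)" using fm[OF p] by simp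
    show "\<bar>w 0 1 ((th,0,0,0) + t *\<^sub>R ev 2) - (L 1 2 th) * t\<bar> \<le> K * t^2"
      using e Kb[OF p, of 0 1] r2 by simp
  qed
  have d23: "pd 2 (w 3 0) (th,0,0,0) = - L 3 2 th" unfolding pd_def
  proof (rule gen)
    fix t :: real assume "\<bar>t\<bar> < 1"
    then have p: "(th,0,t,0) \<in> NC" by (rule inNC(2))
    have e: "w 3 0 (th,0,t,0) = - ((L 3 2 th) * t + Q 0 3 (th,0,t,0))" using fm[OF p] w_antisym[of 3 0 "(th,0,t,0)"] by simp
    show "\<bar>w 3 0 ((th,0,0,0) + t *\<^sub>R ev 2) - (- L 3 2 th) * t\<bar> \<le> K * t^2"
      using e Kb[OF p, of 0 3] r2 by simp
  qed
  have d32: "pd 3 (w 0 2) (th,0,0,0) = L 2 3 th" unfolding pd_def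
  proof (rule gen)
    fix t :: real assume "\<bar>t\<bar> < 1"
    then have p: "(th,0,0,t) \<in> NC" by (rule inNC(3))
    have e: "w 0 2 (th,0,0,t) = (L 2 3 th) * t + Q 0 2 (th,0,0,t)" using fm[OF p] by simp
    show "\<bar>w 0 2 ((th,0,0,0) + t *\<^sub>R ev 3) - (L 2 3 th) * t\<bar> \<le> K * t^2"
      using e Kb[OF p, of 0 2] r2 by simp
  qed
  have d31: "pd 3 (w 1 0) (th,0,0,0) = - L 1 3 th" unfolding pd_def
  proof (rule gen)
    fix t :: real assume "\<bar>t\<bar> < 1"
    then have p: "(th,0,0,t) \<in> NC" by (rule inNC(3))
    have e: "w 1 0 (th,0,0,t) = - ((L 1 3 th) * t + Q 0 1 (th,0,0,t))" using fm[OF p] w_antisym[of 1 0 "(th,0,0,t)"] by simp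
    show "\<bar>w 1 0 ((th,0,0,0) + t *\<^sub>R ev 3) - (- L 1 3 th) * t\<bar> \<le> K * t^2"
      using e Kb[OF p, of 0 1] r2 by simp
  qed
  have d13: "pd 1 (w 0 3) (th,0,0,0) = L 3 1 th" unfolding pd_def
  proof (rule gen)
    fix t :: real assume "\<bar>t\<bar> < 1"
    then have p: "(th,t,0,0) \<in> NC" by (rule inNC(1))
    have e: "w 0 3 (th,t,0,0) = (L 3 1 th) * t + Q 0 3 (th,t,0,0)" using fm[OF p] by simp
    show "\<bar>w 0 3 ((th,0,0,0) + t *\<^sub>R ev 1) - (L 3 1 th) * t\<bar> \<le> K * t^2"
      using e Kb[OF p, of 0 3] r2 by simp
  qed
  have e1: "L 1 1 th + L 2 2 th + L 3 3 th = 0" using cl[of 1 2 3] d11 d22 d33 by simp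
  have e2: "L 1 2 th = L 2 1 th" using cl[of 0 1 2] z d12 d21 by simp
  have e3: "L 2 3 th = L 3 2 th" using cl[of 0 2 3] z d23 d32 by simp
  have e4: "L 1 3 th = L 3 1 th" using cl[of 0 3 1] z d31 d13 by simp
  show "(\<forall>i\<in>{1,2,3}. \<forall>j\<in>{1,2,3}. L i j th = L j i th) \<and> L 1 1 th + L 2 2 th + L 3 3 th = 0"
    using e1 e2 e3 e4 by auto
qed

end
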